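(* Let $L>0$, let $P\in H^2(0,L)$ be real-valued with $P(x)\ge P^0>0$ on $[0,L]$, and let $\theta_1,\dots,\theta_4\in\mathbb R$. Let $\mathcal H=\{(w,v,\xi,\psi): w\in H^2(0,L),\ v\in H^1(0,L),\ \xi=v(L),\ \psi=v(0)\}$ with the norm induced from $H^2\times H^1\times\mathbb C\times\mathbb C$, let $F[w,v]=\theta_1v(0)+\theta_2v'(0)+\theta_3w(0)+\theta_4w'(0)$, and let $$D(A)=\{(w,v,\xi,\psi): w\in H^3(0,L),\ v\in H^2(0,L),\ \xi=v(L),\ \psi=v(0),\ (Pw')'(L)=-w'(L),\ (Pw')'(0)=F[w,v]\}.$$ Then $D(A)$ is dense in $\mathcal H$.
   Context: Prime denotes $d/dx$; functions are complex-valued. $D(A)$ is the domain of the operator $A(w,v,\xi,\psi)=(v,(Pw')',-w'(L),F[w,v])$. *)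

theory Defs
  imports "HOL-Analysis.Analysis"
begin

definition L2_on :: "real \<Rightarrow> (real \<Rightarrow> complex) \<Rightarrow> bool" where
  "L2_on L g \<longleftrightarrow> set_borel_measurable lborel {0..L} g \<and>
     set_integrable lborel {0..L} (\<lambda>x. (cmod (g x))^2)"

definition has_weak_deriv_on :: "real \<Rightarrow> (real \<Rightarrow> complex) \<Rightarrow> (real \<Rightarrow> complex) \<Rightarrow> bool" where
  "has_weak_deriv_on L f g \<longleftrightarrow> L2_on L g \<and>
     (\<forall>x\<in>{0..L}. f x = f 0 + (LINT t:{0..x}|lborel. g t))"

definition deriv_chain :: "nat \<Rightarrow> real \<Rightarrow> (real \<Rightarrow> complex) \<Rightarrow> (nat \<Rightarrow> real \<Rightarrow> complex) \<Rightarrow> bool" where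
  "deriv_chain k L f ds \<longleftrightarrow> (\<forall>x\<in>{0..L}. ds 0 x = f x) \<and>
     (\<forall>j<k. has_weak_deriv_on L (ds j) (ds (Suc j))) \<and> L2_on L (ds k)"

text \<open>Sobolev space H^k(0,L) (functions identified with their continuous representatives
  up to order k-1).\<close>
definition sobolev :: "nat \<Rightarrow> real \<Rightarrow> (real \<Rightarrow> complex) set" where
  "sobolev k L = {f. \<exists>ds. deriv_chain k L f ds}"

definition wderiv :: "nat \<Rightarrow> real \<Rightarrow> nat \<Rightarrow> (real \<Rightarrow> complex) \<Rightarrow> real \<Rightarrow> complex" where
  "wderiv k L j f = (SOME ds. deriv_chain k L f ds) j"

definition sobolev_norm :: "nat \<Rightarrow> real \<Rightarrow> (real \<Rightarrow> complex) \<Rightarrow> real" where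
  "sobolev_norm k L f = sqrt (\<Sum>j\<le>k. LINT x:{0..L}|lborel. (cmod (wderiv k L j f x))^2)"

end

theory Submission
  imports Defs
begin


lemma L2_cont:
  assumes "continuous_on {0..L} g"
  shows "L2_on L g"
  unfolding L2_on_def
proof
  show "set_borel_measurable lborel {0..L} g"
    unfolding set_borel_measurable_def
    using borel_measurable_continuous_on_indicator[OF _ assms] by simp
  have "continuous_on {0..L} (\<lambda>x. (cmod (g x))^2)"
    by (intro continuous_intros assms)
  then show "set_integrable lborel {0..L} (\<lambda>x. (cmod (g x))^2)"
    unfolding set_integrable_def by (intro borel_integrable_compact) auto
qed

lemma set_integrable_const_I: "set_integrable lborel {0..L::real} (\<lambda>x. c::real)"
  unfolding set_integrable_def by (intro borel_integrable_compact) auto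

lemma le_1_sq: "(t::real) \<le> 1 + t^2"
proof -
  have "0 \<le> (t - 1)^2" by simp
  then have "2*t \<le> t^2 + 1" by (simp add: power2_eq_square algebra_simps)
  moreover have "0 \<le> t^2" by simp
  ultimately show ?thesis by linarith
qed

lemma sq_sum_le: "((a::real) + b)^2 \<le> 2*a^2 + 2*b^2"
proof -
  have "0 \<le> (a - b)^2" by simp
  then show ?thesis by (simp add: power2_eq_square algebra_simps)
qed

lemma L2_L1:
  assumes "L2_on L g"
  shows "set_integrable lborel {0..L} g"
proof -
  have i: "set_integrable lborel {0..L} (\<lambda>x. 1 + (cmod (g x))^2)"
    using assms set_integrable_const_I[of L 1] unfolding L2_on_def
    by (intro set_integral_add) auto
  show ?thesis
  proof (rule set_integrable_bound[OF i])
    show "set_borel_measurable lborel {0..L} g" using assms unfolding L2_on_def by auto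
    have "cmod z \<le> 1 + (cmod z)^2" for z
      by (rule le_1_sq)
    then show "AE x in lborel. x \<in> {0..L} \<longrightarrow> norm (g x) \<le> norm (1 + (cmod (g x))\<^sup>2)"
      by auto
  qed
qed

lemma sbm_normsq:
  assumes "set_borel_measurable lborel S f"
  shows "set_borel_measurable lborel S (\<lambda>x. (cmod (f x :: complex))^2)"
proof -
  have "(\<lambda>x. indicator S x *\<^sub>R (cmod (f x))^2) = (\<lambda>x. (cmod (indicator S x *\<^sub>R f x))^2)"
    by (auto simp: indicator_def fun_eq_iff)
  moreover have "(\<lambda>x. (cmod (indicator S x *\<^sub>R f x))^2) \<in> borel_measurable lborel"
    using assms unfolding set_borel_measurable_def by measurable
  ultimately show ?thesis unfolding set_borel_measurable_def by simp
qed

lemma L2_diff: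
  assumes "L2_on L a" "L2_on L b"
  shows "L2_on L (\<lambda>x. a x - b x)"
  unfolding L2_on_def
proof
  have ma: "set_borel_measurable lborel {0..L} a" and mb: "set_borel_measurable lborel {0..L} b"
    using assms unfolding L2_on_def by auto
  show m: "set_borel_measurable lborel {0..L} (\<lambda>x. a x - b x)"
    using ma mb unfolding set_borel_measurable_def by (simp add: scaleR_diff_right)
  have i: "set_integrable lborel {0..L} (\<lambda>x. 2 * (cmod (a x))^2 + 2 * (cmod (b x))^2)"
    using assms unfolding L2_on_def
    by (intro set_integral_add set_integrable_mult_right) auto
  show "set_integrable lborel {0..L} (\<lambda>x. (cmod (a x - b x))^2)"
  proof (rule set_integrable_bound[OF i])
    show "set_borel_measurable lborel {0..L} (\<lambda>x. (cmod (a x - b x))^2)"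
      using m by (rule sbm_normsq)
    have "(cmod (x - y))^2 \<le> 2 * (cmod x)^2 + 2 * (cmod y)^2" for x y :: complex
    proof -
      have "cmod (x - y) \<le> cmod x + cmod y" by (rule norm_triangle_ineq4)
      then have "(cmod (x - y))^2 \<le> (cmod x + cmod y)^2" by (simp add: power_mono)
      also have "\<dots> \<le> 2 * (cmod x)^2 + 2 * (cmod y)^2"
        by (rule sq_sum_le)
      finally show ?thesis .
    qed
    then show "AE x in lborel. x \<in> {0..L} \<longrightarrow> norm ((cmod (a x - b x))^2) \<le> norm (2 * (cmod (a x))^2 + 2 * (cmod (b x))^2)"
      by auto
  qed
qed



lemma L1_sub:
  fixes h :: "real \<Rightarrow> complex"
  assumes "set_integrable lborel {0..L} h" "x \<in> {0..L}"
  shows "set_integrable lborel {0..x} h"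
  using assms by (rule_tac set_integrable_subset[OF assms(1)]) auto

lemma weak_deriv_diff:
  fixes a b a' b' :: "real \<Rightarrow> complex"
  assumes "has_weak_deriv_on L a a'" "has_weak_deriv_on L b b'"
  shows "has_weak_deriv_on L (\<lambda>x. a x - b x) (\<lambda>x. a' x - b' x)"
  unfolding has_weak_deriv_on_def
proof
  have la: "L2_on L a'" and lb: "L2_on L b'" using assms unfolding has_weak_deriv_on_def by auto
  then show "L2_on L (\<lambda>x. a' x - b' x)" by (rule L2_diff)
  show "\<forall>x\<in>{0..L}. a x - b x = a 0 - b 0 + (LINT t:{0..x}|lborel. a' t - b' t)"
  proof
    fix x assume x: "x \<in> {0..L}"
    have ia: "set_integrable lborel {0..x} a'" using L1_sub[OF L2_L1[OF la] x] .
    have ib: "set_integrable lborel {0..x} b'" using L1_sub[OF L2_L1[OF lb] x] .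
    have 1: "a x = a 0 + (LINT t:{0..x}|lborel. a' t)" 
      using assms(1) x unfolding has_weak_deriv_on_def by blast
    have 2: "b x = b 0 + (LINT t:{0..x}|lborel. b' t)"
      using assms(2) x unfolding has_weak_deriv_on_def by blast
    show "a x - b x = a 0 - b 0 + (LINT t:{0..x}|lborel. a' t - b' t)"
      unfolding set_integral_diff(2)[OF ia ib] 1 2 by (simp add: algebra_simps)
  qed
qed

lemma weak_deriv_cong:
  assumes "has_weak_deriv_on L f g" "\<forall>x\<in>{0..L}. f2 x = f x" "0 \<le> L"
  shows "has_weak_deriv_on L f2 g"
  unfolding has_weak_deriv_on_def
proof (intro conjI ballI)
  show "L2_on L g" using assms(1) unfolding has_weak_deriv_on_def by blast
  fix x assume x: "x \<in> {0..L}"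
  have 0: "0 \<in> {0..L}" using assms(3) by simp
  have fx: "f x = f 0 + (LINT t:{0..x}|lborel. g t)" using assms(1) x unfolding has_weak_deriv_on_def by blast
  have a: "f2 x = f x" using assms(2) x by blast
  have b: "f2 0 = f 0" using assms(2) 0 by blast
  show "f2 x = f2 0 + (LINT t:{0..x}|lborel. g t)"
    unfolding a b by (rule fx)
qed

lemma weak_deriv_FTC:
  fixes f f' :: "real \<Rightarrow> complex"
  assumes "0 \<le> L" "\<forall>x\<in>{0..L}. (f has_vector_derivative f' x) (at x within {0..L})"
    "continuous_on {0..L} f'"
  shows "has_weak_deriv_on L f f'"
  unfolding has_weak_deriv_on_def
proof
  show "L2_on L f'" using assms(3) by (rule L2_cont)
  show "\<forall>x\<in>{0..L}. f x = f 0 + (LINT t:{0..x}|lborel. f' t)"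
  proof
    fix x assume x: "x \<in> {0..L}"
    have sub: "{0..x} \<subseteq> {0..L}" using x by auto
    have "(f' has_integral (f x - f 0)) {0..x}"
    proof (rule fundamental_theorem_of_calculus)
      show "0 \<le> x" using x by simp
      fix y assume "y \<in> {0..x}"
      then have "y \<in> {0..L}" using sub by blast
      then show "(f has_vector_derivative f' y) (at y within {0..x})"
        using assms(2) sub has_vector_derivative_within_subset by blast
    qed
    then have I: "integral {0..x} f' = f x - f 0" by (rule integral_unique)
    have "set_integrable lborel {0..x} f'"
      unfolding set_integrable_def
      by (intro borel_integrable_compact continuous_on_subset[OF assms(3) sub]) auto
    then have "(LINT t:{0..x}|lborel. f' t) = integral {0..x} f'"
      by (rule set_borel_integral_eq_integral(2))
    then show "f x = f 0 + (LINT t:{0..x}|lborel. f' t)"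
      using I by simp
  qed
qed

lemma prim_cont:
  fixes h :: "real \<Rightarrow> complex"
  assumes "set_integrable lborel {0..L} h"
  shows "continuous_on {0..L} (\<lambda>x. LINT t:{0..x}|lborel. h t)"
proof -
  have "h integrable_on {0..L}" using set_borel_integral_eq_integral(1)[OF assms] .
  then have c: "continuous_on {0..L} (\<lambda>x. integral {0..x} h)" by (rule indefinite_integral_continuous_1)
  have "\<And>x. x \<in> {0..L} \<Longrightarrow> (LINT t:{0..x}|lborel. h t) = integral {0..x} h"
    using set_borel_integral_eq_integral(2)[OF L1_sub[OF assms]] by blast
  then show ?thesis by (intro continuous_on_eq[OF c]) simp
qed

lemma weak_deriv_cont:
  fixes f g :: "real \<Rightarrow> complex"
  assumes "has_weak_deriv_on L f g"
  shows "continuous_on {0..L} f"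
proof -
  have "continuous_on {0..L} (\<lambda>x. f 0 + (LINT t:{0..x}|lborel. g t))"
  proof -
    have "L2_on L g" using assms unfolding has_weak_deriv_on_def by blast
    then show ?thesis by (intro continuous_on_add continuous_on_const prim_cont L2_L1)
  qed
  moreover have "\<And>x. x \<in> {0..L} \<Longrightarrow> f 0 + (LINT t:{0..x}|lborel. g t) = f x"
    using assms unfolding has_weak_deriv_on_def by (metis (no_types))
  ultimately show ?thesis using continuous_on_eq by blast
qed



lemma Z_lemma:
  fixes h :: "real \<Rightarrow> complex"
  assumes hi: "set_integrable lborel {0..L} h"
    and h0: "\<forall>x\<in>{0..L}. (LINT t:{0..x}|lborel. h t) = 0"
  shows "AE x in lborel. x \<in> {0..L} \<longrightarrow> h x = 0"
proof -
  define f where "f = (\<lambda>x. indicator {0..L} x *\<^sub>R h x)"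
  have "integrable lborel f" using hi unfolding set_integrable_def f_def .
  then have fU: "f integrable_on UNIV" by (rule integrable_on_lborel)
  have fc: "f integrable_on cbox a b" for a b
    using integrable_on_subcbox[OF fU] by blast
  obtain N where N: "negligible N"
    and conv: "\<And>x e. \<lbrakk>x \<notin> N; 0 < e\<rbrakk> \<Longrightarrow>
               \<exists>d>0. \<forall>h. 0 < h \<and> h < d \<longrightarrow>
                         norm(integral (cbox x (x + h *\<^sub>R One)) f /\<^sub>R h ^ DIM(real) - f x) < e"
    using integrable_ccontinuous_explicit[OF fc] by blast
  have I0: "integral {0..y} f = 0" if y: "y \<in> {0..L}" for y
  proof -
    have "integral {0..y} f = integral {0..y} h"
      using y by (intro integral_cong) (auto simp: f_def indicator_def)
    also have "\<dots> = (LINT t:{0..y}|lborel. h t)"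
      using set_borel_integral_eq_integral(2)[OF L1_sub[OF hi y]] by simp
    also have "\<dots> = 0" using h0 y by blast
    finally show ?thesis .
  qed
  have hz: "h x = 0" if x: "x \<in> {0<..<L}" "x \<notin> N" for x
  proof -
    have "cmod (f x) < e" if e: "e > 0" for e
    proof -
      obtain d where d: "d > 0" and dd: "\<And>h. 0 < h \<and> h < d \<Longrightarrow>
          norm(integral (cbox x (x + h *\<^sub>R One)) f /\<^sub>R h ^ DIM(real) - f x) < e"
        using conv[OF x(2) e] by blast
      define t where "t = min (d/2) ((L - x)/2)"
      have t: "0 < t" "t < d" "x + t \<le> L" using d x unfolding t_def by (auto simp: min_def field_simps)
      have "integral {0..x} f + integral {x..x+t} f = integral {0..x+t} f"
        proof (rule Henstock_Kurzweil_Integration.integral_combine)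
        show "f integrable_on {0..x+t}" using fc[of 0 "x+t"] by simp
      qed (use x t in auto)
      then have "integral {x..x+t} f = 0" using I0[of x] I0[of "x+t"] x t by auto
      moreover have "norm(integral (cbox x (x + t *\<^sub>R One)) f /\<^sub>R t ^ DIM(real) - f x) < e"
        using dd t by blast
      ultimately show ?thesis by simp
    qed
    then have "f x = 0"
      by (metis norm_le_zero_iff not_less order_less_irrefl)
    then show ?thesis using x by (simp add: f_def)
  qed
  have "negligible (N \<union> {0, L})" using N by simp
  then have "N \<union> {0, L} \<in> null_sets lebesgue" using negligible_iff_null_sets by blast
  then have "AE x in lebesgue. x \<notin> N \<union> {0, L}" by (rule AE_not_in)
  then have "AE x in lborel. x \<notin> N \<union> {0, L}" by (simp add: AE_completion_iff)
  then show ?thesis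
  proof (rule eventually_mono)
    fix x assume "x \<notin> N \<union> {0, L}"
    then show "x \<in> {0..L} \<longrightarrow> h x = 0" using hz by auto
  qed
qed

lemma cont_AE_eq:
  fixes d :: "real \<Rightarrow> complex"
  assumes c: "continuous_on {0..L} d" and L: "0 < L"
    and ae: "AE x in lborel. x \<in> {0..L} \<longrightarrow> d x = 0"
  shows "\<forall>x\<in>{0..L}. d x = 0"
proof -
  have cg: "continuous_on {0..L} (\<lambda>x. cmod (d x))" by (intro continuous_intros c)
  have si: "set_integrable lborel {0..L} (\<lambda>x. cmod (d x))"
    unfolding set_integrable_def by (intro borel_integrable_compact cg) auto
  have "(LINT x:{0..L}|lborel. cmod (d x)) = 0"
    unfolding set_lebesgue_integral_def
    by (rule integral_eq_zero_AE, rule eventually_mono[OF ae]) (auto simp: indicator_def)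
  then have "integral {0..L} (\<lambda>x. cmod (d x)) = 0"
    using set_borel_integral_eq_integral(2)[OF si] by simp
  then have "\<forall>x\<in>{0..L}. cmod (d x) = 0"
    using integral_eq_0_iff[OF cg L] by simp
  then show ?thesis by simp
qed

lemma chain_unique:
  assumes ds: "deriv_chain k L f ds" and es: "deriv_chain k L f es" and L: "0 < L"
  shows "j \<le> k \<Longrightarrow> (AE x in lborel. x \<in> {0..L} \<longrightarrow> ds j x = es j x) \<and>
           (j < k \<longrightarrow> (\<forall>x\<in>{0..L}. ds j x = es j x))"
proof (induction j)
  case 0
  have "\<forall>x\<in>{0..L}. ds 0 x = es 0 x" using ds es unfolding deriv_chain_def by simp
  then show ?case by auto
next
  case (Suc j)
  then have jk: "j < k" by simp
  then have eqj: "\<forall>x\<in>{0..L}. ds j x = es j x" using Suc.IH by simp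
  have hd: "has_weak_deriv_on L (ds j) (ds (Suc j))" using ds jk unfolding deriv_chain_def by blast
  have he: "has_weak_deriv_on L (es j) (es (Suc j))" using es jk unfolding deriv_chain_def by blast
  have hdiff: "has_weak_deriv_on L (\<lambda>x. ds j x - es j x) (\<lambda>x. ds (Suc j) x - es (Suc j) x)"
    by (rule weak_deriv_diff[OF hd he])
  have l2: "L2_on L (\<lambda>x. ds (Suc j) x - es (Suc j) x)"
    using hdiff unfolding has_weak_deriv_on_def by blast
  have "\<forall>x\<in>{0..L}. (LINT t:{0..x}|lborel. ds (Suc j) t - es (Suc j) t) = 0"
  proof
    fix x assume x: "x \<in> {0..L}"
    have 0: "0 \<in> {0..L}" using L by simp
    have "ds j x - es j x = ds j 0 - es j 0 + (LINT t:{0..x}|lborel. ds (Suc j) t - es (Suc j) t)"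
      using hdiff x unfolding has_weak_deriv_on_def by blast
    moreover have "ds j x - es j x = 0" "ds j 0 - es j 0 = 0" using eqj x 0 by auto
    ultimately show "(LINT t:{0..x}|lborel. ds (Suc j) t - es (Suc j) t) = 0" by simp
  qed
  then have ae: "AE x in lborel. x \<in> {0..L} \<longrightarrow> ds (Suc j) x - es (Suc j) x = 0"
    by (intro Z_lemma L2_L1 l2)
  then have ae': "AE x in lborel. x \<in> {0..L} \<longrightarrow> ds (Suc j) x = es (Suc j) x"
    by (rule eventually_mono) simp
  have "\<forall>x\<in>{0..L}. ds (Suc j) x = es (Suc j) x" if sk: "Suc j < k"
  proof -
    have "has_weak_deriv_on L (ds (Suc j)) (ds (Suc (Suc j)))" using ds sk unfolding deriv_chain_def by blast
    then have c1: "continuous_on {0..L} (ds (Suc j))" by (rule weak_deriv_cont)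
    have "has_weak_deriv_on L (es (Suc j)) (es (Suc (Suc j)))" using es sk unfolding deriv_chain_def by blast
    then have c2: "continuous_on {0..L} (es (Suc j))" by (rule weak_deriv_cont)
    have "continuous_on {0..L} (\<lambda>x. ds (Suc j) x - es (Suc j) x)" by (intro continuous_intros c1 c2)
    from cont_AE_eq[OF this L ae] show ?thesis by simp
  qed
  with ae' show ?case by blast
qed

lemma wderiv_chain:
  assumes ds: "deriv_chain k L f ds" and L: "0 < L"
  shows "\<forall>j<k. \<forall>x\<in>{0..L}. wderiv k L j f x = ds j x"
    and "sobolev_norm k L f = sqrt (\<Sum>j\<le>k. LINT x:{0..L}|lborel. (cmod (ds j x))^2)"
proof -
  define es where "es = (SOME ds. deriv_chain k L f ds)"
  have es: "deriv_chain k L f es" unfolding es_def by (rule someI[of "deriv_chain k L f", OF ds])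
  have w: "wderiv k L j f = es j" for j unfolding wderiv_def es_def by simp
  show "\<forall>j<k. \<forall>x\<in>{0..L}. wderiv k L j f x = ds j x"
    using chain_unique[OF es ds L] unfolding w by auto
  have "(LINT x:{0..L}|lborel. (cmod (es j x))^2) = (LINT x:{0..L}|lborel. (cmod (ds j x))^2)"
    if j: "j \<le> k" for j
  proof (cases "j < k")
    case True
    then have "\<forall>x\<in>{0..L}. es j x = ds j x" using chain_unique[OF es ds L] j by blast
    then show ?thesis by (intro set_lebesgue_integral_cong) auto
  next
    case False
    then have jk: "j = k" using j by simp
    have ae: "AE x in lborel. x \<in> {0..L} \<longrightarrow> es k x = ds k x" using chain_unique[OF es ds L] by blast
    have "L2_on L (es k)" "L2_on L (ds k)" using es ds unfolding deriv_chain_def by auto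
    then have m: "integrable lborel (\<lambda>x. indicator {0..L} x *\<^sub>R (cmod (es k x))^2)"
      "integrable lborel (\<lambda>x. indicator {0..L} x *\<^sub>R (cmod (ds k x))^2)"
      unfolding L2_on_def set_integrable_def by auto
    show ?thesis unfolding jk set_lebesgue_integral_def
      by (rule integral_cong_AE[OF borel_measurable_integrable[OF m(1)] borel_measurable_integrable[OF m(2)]],
          rule eventually_mono[OF ae]) (auto simp: indicator_def)
  qed
  then show "sobolev_norm k L f = sqrt (\<Sum>j\<le>k. LINT x:{0..L}|lborel. (cmod (ds j x))^2)"
    unfolding sobolev_norm_def w by simp
qed



lemma trunc_L2:
  fixes g :: "real \<Rightarrow> complex"
  assumes g: "L2_on L g" and e: "e > 0"
  obtains M where "M > 0"
    "(LINT x:{0..L}|lborel. (cmod (g x - (if cmod (g x) \<le> M then g x else 0)))^2) < e"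
proof -
  define G where "G = (\<lambda>x. indicator {0..L} x *\<^sub>R g x)"
  have Gm: "G \<in> borel_measurable lborel" using g unfolding L2_on_def set_borel_measurable_def G_def by simp
  define F where "F = (\<lambda>(n::nat) x. if cmod (G x) \<le> real n then 0 else (cmod (G x))^2)"
  have eqF: "(LINT x:{0..L}|lborel. (cmod (g x - (if cmod (g x) \<le> real n then g x else 0)))^2)
      = integral\<^sup>L lborel (F n)" for n
    unfolding set_lebesgue_integral_def
    by (rule Bochner_Integration.integral_cong) (auto simp: F_def G_def indicator_def)
  have wi: "integrable lborel (\<lambda>x. (cmod (G x))^2)"
  proof -
    have "(\<lambda>x. (cmod (G x))^2) = (\<lambda>x. indicator {0..L} x *\<^sub>R (cmod (g x))^2)"
      by (auto simp: G_def indicator_def fun_eq_iff)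
    then show ?thesis using g unfolding L2_on_def set_integrable_def by simp
  qed
  have lim: "(\<lambda>n. integral\<^sup>L lborel (F n)) \<longlonglongrightarrow> integral\<^sup>L lborel (\<lambda>x::real. 0::real)"
  proof (rule Bochner_Integration.integral_dominated_convergence[where f="\<lambda>x. 0::real" and s=F and M=lborel and w="\<lambda>x. (cmod (G x))^2"])
    show "(\<lambda>x::real. 0::real) \<in> borel_measurable lborel" by simp
    show "F n \<in> borel_measurable lborel" for n unfolding F_def using Gm by measurable
    show "integrable lborel (\<lambda>x. (cmod (G x))^2)" by (rule wi)
    show "AE x in lborel. (\<lambda>n. F n x) \<longlonglongrightarrow> 0"
    proof (rule AE_I2)
      fix x
      have "eventually (\<lambda>n. F n x = 0) sequentially"
        using eventually_ge_at_top[of "nat \<lceil>cmod (G x)\<rceil>"]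
      proof (rule eventually_mono)
        fix n assume "nat \<lceil>cmod (G x)\<rceil> \<le> n"
        then have "\<lceil>cmod (G x)\<rceil> \<le> int n" by (simp add: nat_le_iff)
        moreover have "cmod (G x) \<le> of_int \<lceil>cmod (G x)\<rceil>" by (rule le_of_int_ceiling)
        ultimately have "cmod (G x) \<le> real n" by linarith
        then show "F n x = 0" by (simp add: F_def)
      qed
      then show "(\<lambda>n. F n x) \<longlonglongrightarrow> 0" by (rule tendsto_eventually)
    qed
    show "AE x in lborel. norm (F n x) \<le> (cmod (G x))^2" for n
      by (rule AE_I2) (auto simp: F_def)
  qed
  then have "eventually (\<lambda>n. integral\<^sup>L lborel (F n) < e) sequentially"
    using e by (intro order_tendstoD(2)) auto
  then obtain n where n1: "n \<ge> 1" and "integral\<^sup>L lborel (F n) < e"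
    using eventually_ge_at_top[of 1] by (metis (mono_tags, lifting) eventually_at_top_linorder order_refl max.cobounded1 max.cobounded2)
  then show ?thesis using that[of "real n"] eqF[of n] by simp
qed

lemma L2_bounded:
  fixes B :: "real \<Rightarrow> complex"
  assumes "B \<in> borel_measurable lborel" "\<forall>x. cmod (B x) \<le> M"
  shows "L2_on L B"
  unfolding L2_on_def
proof
  show sb: "set_borel_measurable lborel {0..L} B"
    using assms(1) unfolding set_borel_measurable_def by measurable
  show "set_integrable lborel {0..L} (\<lambda>x. (cmod (B x))^2)"
  proof (rule set_integrable_bound[OF set_integrable_const_I[of L "M^2"]])
    show "set_borel_measurable lborel {0..L} (\<lambda>x. (cmod (B x))^2)" using sb by (rule sbm_normsq)
    have "(cmod (B x))^2 \<le> M^2" for x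
      using assms(2) norm_ge_zero power_mono by blast
    then show "AE x in lborel. x \<in> {0..L} \<longrightarrow> norm ((cmod (B x))^2) \<le> norm (M^2)"
      by (auto intro: order_trans[OF _ abs_ge_self])
  qed
qed

lemma AE_not_negligible:
  assumes "negligible N"
  shows "AE x in lborel. x \<notin> N"
proof -
  have "N \<in> null_sets lebesgue" using assms negligible_iff_null_sets by blast
  then have "AE x in lebesgue. x \<notin> N" by (rule AE_not_in)
  then show ?thesis by (simp add: AE_completion_iff)
qed

lemma steklov:
  fixes B :: "real \<Rightarrow> complex"
  assumes Bm: "B \<in> borel_measurable lborel" and Bb: "\<forall>x. cmod (B x) \<le> M"
    and B0: "\<forall>x. x \<notin> {0..L} \<longrightarrow> B x = 0" and e: "e > 0" and L: "L > 0"
  obtains q where "continuous_on {0..L} q" "(LINT x:{0..L}|lborel. (cmod (B x - q x))^2) < e"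
proof -
  have M0: "0 \<le> M" using Bb norm_ge_zero order_trans by blast
  have iM: "integrable lborel (\<lambda>x. indicator {0..L} x *\<^sub>R M)"
    by (intro borel_integrable_compact) auto
  have Bi: "integrable lborel B"
  proof (rule Bochner_Integration.integrable_bound[OF iM Bm])
    show "AE x in lborel. norm (B x) \<le> norm (indicator {0..L} x *\<^sub>R M)"
      using Bb B0 M0 by (intro AE_I2) (auto simp: indicator_def)
  qed
  then have BU: "B integrable_on UNIV" by (rule integrable_on_lborel)
  have Bc: "B integrable_on cbox a b" for a b using integrable_on_subcbox[OF BU] by blast
  obtain N where N: "negligible N"
    and conv: "\<And>x e. \<lbrakk>x \<notin> N; 0 < e\<rbrakk> \<Longrightarrow>
               \<exists>d>0. \<forall>h. 0 < h \<and> h < d \<longrightarrow>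
                         norm(integral (cbox x (x + h *\<^sub>R One)) B /\<^sub>R h ^ DIM(real) - B x) < e"
    using integrable_ccontinuous_explicit[OF Bc] by blast
  define t where "t = (\<lambda>n::nat. 1 / real (Suc n))"
  have t0: "0 < t n" "t n \<le> 1" for n unfolding t_def by auto
  define S where "S = (\<lambda>n x. integral {x..x + t n} B /\<^sub>R t n)"
  have Slim: "(\<lambda>n. S n x) \<longlonglongrightarrow> B x" if x: "x \<notin> N" for x
    unfolding LIMSEQ_iff
  proof (intro allI impI)
    fix r :: real assume r: "r > 0"
    obtain d where d: "d > 0" and dd: "\<And>h. 0 < h \<and> h < d \<Longrightarrow>
          norm(integral (cbox x (x + h *\<^sub>R One)) B /\<^sub>R h ^ DIM(real) - B x) < r"
      using conv[OF x r] by blast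
    obtain n0 :: nat where n0: "1 / d < real n0" using reals_Archimedean2 by blast
    show "\<exists>no. \<forall>n\<ge>no. norm (S n x - B x) < r"
    proof (intro exI allI impI)
      fix n assume "n0 \<le> n"
      then have "1 / d < real (Suc n)" using n0 by linarith
      then have "t n < d" unfolding t_def using d by (simp add: field_simps)
      then show "norm (S n x - B x) < r" using dd[of "t n"] t0[of n] unfolding S_def by simp
    qed
  qed
  have Sb: "cmod (S n x) \<le> M" for n x
  proof -
    have "(B has_integral integral {x..x + t n} B) (cbox x (x + t n))"
      using Bc[of x "x + t n"] by (simp add: has_integral_integral)
    then have "norm (integral {x..x + t n} B) \<le> M * measure lborel (cbox x (x + t n))"
      using Bb M0 by (intro has_integral_bound) auto
    then have "norm (integral {x..x + t n} B) \<le> M * t n" using t0[of n] by simp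
    then show ?thesis unfolding S_def using t0[of n] by (simp add: field_simps)
  qed
  define Phi where "Phi = (\<lambda>y. integral {0..y} B)"
  have Phic: "continuous_on {0..L+1} Phi" unfolding Phi_def
    by (rule indefinite_integral_continuous_1) (use Bc[of 0 "L+1"] in simp)
  have Scont: "continuous_on {0..L} (S n)" for n
  proof -
    have eq: "S n x = (Phi (x + t n) - Phi x) /\<^sub>R t n" if x: "x \<in> {0..L}" for x
    proof -
      have "integral {0..x} B + integral {x..x + t n} B = integral {0..x + t n} B"
        using x t0[of n] by (intro Henstock_Kurzweil_Integration.integral_combine) (auto simp: Bc[of 0 "x + t n", simplified])
      then have "integral {x..x + t n} B = integral {0..x + t n} B - integral {0..x} B"
        by (simp add: algebra_simps)
      then show ?thesis unfolding S_def Phi_def by simp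
    qed
    have c1: "continuous_on {0..L} (\<lambda>x. Phi (x + t n))"
      by (rule continuous_on_compose2[OF Phic]) (use t0[of n] in \<open>auto intro!: continuous_intros\<close>)
    have c2: "continuous_on {0..L} Phi" by (rule continuous_on_subset[OF Phic]) auto
    have "continuous_on {0..L} (\<lambda>x. (Phi (x + t n) - Phi x) /\<^sub>R t n)"
      by (intro continuous_intros c1 c2)
    then show ?thesis by (rule continuous_on_eq) (simp add: eq)
  qed
  define H where "H = (\<lambda>n x. (cmod (B x - indicator {0..L} x *\<^sub>R S n x))^2)"
  have eqH: "(LINT x:{0..L}|lborel. (cmod (B x - S n x))^2) = integral\<^sup>L lborel (H n)" for n
    unfolding set_lebesgue_integral_def
    by (rule Bochner_Integration.integral_cong) (auto simp: H_def indicator_def B0)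
  have iW: "integrable lborel (\<lambda>x. indicator {0..L} x *\<^sub>R (2*M)^2)"
    by (intro borel_integrable_compact) auto
  have lim: "(\<lambda>n. integral\<^sup>L lborel (H n)) \<longlonglongrightarrow> integral\<^sup>L lborel (\<lambda>x::real. 0::real)"
  proof (rule Bochner_Integration.integral_dominated_convergence[where f="\<lambda>x. 0::real" and s=H and M=lborel and w="\<lambda>x. indicator {0..L} x *\<^sub>R (2*M)^2"])
    show "(\<lambda>x::real. 0::real) \<in> borel_measurable lborel" by simp
    show "H n \<in> borel_measurable lborel" for n
    proof -
      have "(\<lambda>x. indicator {0..L} x *\<^sub>R S n x) \<in> borel_measurable borel"
        by (rule borel_measurable_continuous_on_indicator[OF _ Scont]) auto
      then have "(\<lambda>x. indicator {0..L} x *\<^sub>R S n x) \<in> borel_measurable lborel" by simp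
      then show ?thesis unfolding H_def using Bm by measurable
    qed
    show "integrable lborel (\<lambda>x. indicator {0..L} x *\<^sub>R (2*M)^2)" by (rule iW)
    show "AE x in lborel. (\<lambda>n. H n x) \<longlonglongrightarrow> 0"
      using AE_not_negligible[OF N]
    proof (rule eventually_mono)
      fix x assume x: "x \<notin> N"
      show "(\<lambda>n. H n x) \<longlonglongrightarrow> 0"
      proof (cases "x \<in> {0..L}")
        case True
        have "(\<lambda>n. (cmod (B x - S n x))^2) \<longlonglongrightarrow> (cmod (B x - B x))^2"
          by (intro tendsto_intros Slim x)
        then show ?thesis using True unfolding H_def by simp
      next
        case False
        then show ?thesis unfolding H_def using B0 by simp
      qed
    qed
    show "AE x in lborel. norm (H n x) \<le> indicator {0..L} x *\<^sub>R (2*M)^2" for n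
    proof (rule AE_I2)
      fix x
      show "norm (H n x) \<le> indicator {0..L} x *\<^sub>R (2*M)^2"
      proof (cases "x \<in> {0..L}")
        case True
        have "cmod (B x - S n x) \<le> cmod (B x) + cmod (S n x)" by (rule norm_triangle_ineq4)
        also have "\<dots> \<le> 2 * M" using Bb Sb[of n x] by (smt (verit))
        finally have "cmod (B x - S n x) \<le> 2 * M" .
        then have "(cmod (B x - S n x))^2 \<le> (2*M)^2" by (intro power_mono) auto
        then show ?thesis using True unfolding H_def by simp
      next
        case False
        then show ?thesis unfolding H_def using B0 by simp
      qed
    qed
  qed
  then have "eventually (\<lambda>n. integral\<^sup>L lborel (H n) < e) sequentially"
    using e by (intro order_tendstoD(2)) auto
  then obtain n where "integral\<^sup>L lborel (H n) < e"
    by (meson eventually_sequentially order_refl)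
  then show ?thesis using that[OF Scont[of n]] eqH[of n] by simp
qed



lemma d2_tri:
  fixes a b c :: "real \<Rightarrow> complex"
  assumes a: "L2_on L a" and b: "L2_on L b" and c: "L2_on L c"
  shows "(LINT x:{0..L}|lborel. (cmod (a x - c x))^2) \<le>
    2 * (LINT x:{0..L}|lborel. (cmod (a x - b x))^2) + 2 * (LINT x:{0..L}|lborel. (cmod (b x - c x))^2)"
proof -
  have i1: "set_integrable lborel {0..L} (\<lambda>x. (cmod (a x - c x))^2)"
    using L2_diff[OF a c] unfolding L2_on_def by blast
  have i2: "set_integrable lborel {0..L} (\<lambda>x. (cmod (a x - b x))^2)"
    using L2_diff[OF a b] unfolding L2_on_def by blast
  have i3: "set_integrable lborel {0..L} (\<lambda>x. (cmod (b x - c x))^2)"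
    using L2_diff[OF b c] unfolding L2_on_def by blast
  have "(LINT x:{0..L}|lborel. (cmod (a x - c x))^2) \<le>
      (LINT x:{0..L}|lborel. 2 * (cmod (a x - b x))^2 + 2 * (cmod (b x - c x))^2)"
  proof (rule set_integral_mono[OF i1])
    show "set_integrable lborel {0..L} (\<lambda>x. 2 * (cmod (a x - b x))^2 + 2 * (cmod (b x - c x))^2)"
      using i2 i3 by (intro set_integral_add set_integrable_mult_right)
    fix x
    have "cmod (a x - c x) \<le> cmod (a x - b x) + cmod (b x - c x)"
      using norm_triangle_ineq[of "a x - b x" "b x - c x"] by simp
    then have "(cmod (a x - c x))^2 \<le> (cmod (a x - b x) + cmod (b x - c x))^2"
      by (intro power_mono) auto
    also have "\<dots> \<le> 2 * (cmod (a x - b x))^2 + 2 * (cmod (b x - c x))^2" by (rule sq_sum_le)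
    finally show "(cmod (a x - c x))^2 \<le> 2 * (cmod (a x - b x))^2 + 2 * (cmod (b x - c x))^2" .
  qed
  also have "\<dots> = 2 * (LINT x:{0..L}|lborel. (cmod (a x - b x))^2) + 2 * (LINT x:{0..L}|lborel. (cmod (b x - c x))^2)"
    using i2 i3 by (subst set_integral_add(2)) (auto intro: set_integrable_mult_right)
  finally show ?thesis .
qed

lemma int_bound:
  fixes F :: "real \<Rightarrow> real"
  assumes "set_integrable lborel {0..L} F" "\<forall>x\<in>{0..L}. F x \<le> c" "0 \<le> L"
  shows "(LINT x:{0..L}|lborel. F x) \<le> c * L"
proof -
  have "(LINT x:{0..L}|lborel. F x) \<le> (LINT x:{0..L}|lborel. c)"
    using assms by (intro set_integral_mono set_integrable_const_I) auto
  also have "\<dots> = measure lborel {0..L} *\<^sub>R c" by (rule set_integral_const) (auto simp: emeasure_lborel_Icc_eq)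
  also have "\<dots> = c * L" using assms(3) by simp
  finally show ?thesis .
qed

lemma dens_poly:
  fixes g :: "real \<Rightarrow> complex"
  assumes g: "L2_on L g" and e: "e > 0" and L: "L > 0"
  obtains p where "polynomial_function p" "(LINT x:{0..L}|lborel. (cmod (g x - p x))^2) < e"
proof -
  obtain M where M: "M > 0"
    and tr: "(LINT x:{0..L}|lborel. (cmod (g x - (if cmod (g x) \<le> M then g x else 0)))^2) < e/16"
    using trunc_L2[OF g, of "e/16"] e by auto
  define G where "G = (\<lambda>x. indicator {0..L} x *\<^sub>R g x)"
  have Gm: "G \<in> borel_measurable lborel" using g unfolding L2_on_def set_borel_measurable_def G_def by simp
  define B where "B = (\<lambda>x. if cmod (G x) \<le> M then G x else 0)"
  have Bm: "B \<in> borel_measurable lborel" unfolding B_def using Gm by measurable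
  have Bb: "\<forall>x. cmod (B x) \<le> M" using M unfolding B_def by auto
  have B0: "\<forall>x. x \<notin> {0..L} \<longrightarrow> B x = 0" unfolding B_def G_def by auto
  have BI: "\<forall>x\<in>{0..L}. B x = (if cmod (g x) \<le> M then g x else 0)" unfolding B_def G_def by auto
  obtain q where qc: "continuous_on {0..L} q" and qB: "(LINT x:{0..L}|lborel. (cmod (B x - q x))^2) < e/16"
    using steklov[OF Bm Bb B0 _ L, of "e/16"] e by auto
  define eta where "eta = min 1 (e / (16 * (L + 1)))"
  have eta: "0 < eta" "eta \<le> 1" "eta \<le> e / (16 * (L + 1))" unfolding eta_def using e L by auto
  obtain p where p: "polynomial_function p" and pq: "\<forall>x\<in>{0..L}. norm (q x - p x) < eta"
    using Stone_Weierstrass_polynomial_function[OF _ qc eta(1)] by auto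
  have pc: "continuous_on {0..L} p" using p by (rule continuous_on_polymonial_function)
  have lg: "L2_on L g" by (rule g)
  have lB: "L2_on L B" using Bm Bb by (rule L2_bounded)
  have lq: "L2_on L q" using qc by (rule L2_cont)
  have lp: "L2_on L p" using pc by (rule L2_cont)
  have gB: "(LINT x:{0..L}|lborel. (cmod (g x - B x))^2) < e/16"
  proof -
    have "(LINT x:{0..L}|lborel. (cmod (g x - B x))^2) =
        (LINT x:{0..L}|lborel. (cmod (g x - (if cmod (g x) \<le> M then g x else 0)))^2)"
      using BI by (intro set_lebesgue_integral_cong) auto
    then show ?thesis using tr by simp
  qed
  have qp: "(LINT x:{0..L}|lborel. (cmod (q x - p x))^2) \<le> eta^2 * L"
  proof (rule int_bound)
    show "set_integrable lborel {0..L} (\<lambda>x. (cmod (q x - p x))^2)"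
      using L2_diff[OF lq lp] unfolding L2_on_def by blast
    show "\<forall>x\<in>{0..L}. (cmod (q x - p x))^2 \<le> eta^2"
      using pq by (auto intro!: power_mono)
  qed (use L in simp)
  have "eta^2 * L \<le> eta * L" using eta L by (simp add: power2_eq_square mult_left_le)
  also have "eta * L \<le> e / (16 * (L + 1)) * L" using eta L by (intro mult_right_mono) auto
  also have "\<dots> < e / 16" using e L by (simp add: field_simps)
  finally have qp': "(LINT x:{0..L}|lborel. (cmod (q x - p x))^2) < e/16" using qp by simp
  have t1: "(LINT x:{0..L}|lborel. (cmod (g x - p x))^2) \<le>
    2 * (LINT x:{0..L}|lborel. (cmod (g x - B x))^2) + 2 * (LINT x:{0..L}|lborel. (cmod (B x - p x))^2)"
    by (rule d2_tri[OF lg lB lp])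
  have t2: "(LINT x:{0..L}|lborel. (cmod (B x - p x))^2) \<le>
    2 * (LINT x:{0..L}|lborel. (cmod (B x - q x))^2) + 2 * (LINT x:{0..L}|lborel. (cmod (q x - p x))^2)"
    by (rule d2_tri[OF lB lq lp])
  have "(LINT x:{0..L}|lborel. (cmod (g x - p x))^2) < e"
    using t1 t2 gB qB qp' e by linarith
  with p that show ?thesis by blast
qed



lemma mono_set:
  fixes F :: "real \<Rightarrow> real"
  assumes "set_integrable lborel {0..L} F" "\<forall>y. 0 \<le> F y" "x \<in> {0..L}"
  shows "(LINT t:{0..x}|lborel. F t) \<le> (LINT t:{0..L}|lborel. F t)"
  unfolding set_lebesgue_integral_def
proof (rule integral_mono)
  show "integrable lborel (\<lambda>t. indicator {0..L} t *\<^sub>R F t)" using assms(1) unfolding set_integrable_def .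
  have "set_integrable lborel {0..x} F" using assms(1,3) by (rule_tac set_integrable_subset[OF assms(1)]) auto
  then show "integrable lborel (\<lambda>t. indicator {0..x} t *\<^sub>R F t)" unfolding set_integrable_def .
  fix t show "indicator {0..x} t *\<^sub>R F t \<le> indicator {0..L} t *\<^sub>R F t"
    using assms(2,3) by (auto simp: indicator_def)
qed

lemma amgm: "0 < (d::real) \<Longrightarrow> c \<le> d/2 + (1/(2*d)) * c^2"
proof -
  assume d: "0 < d"
  have "0 \<le> (d - c)^2" by simp
  then have "2*d*c \<le> d^2 + c^2" by (simp add: power2_eq_square algebra_simps)
  then have "c \<le> (d^2 + c^2) / (2*d)" using d by (simp add: field_simps)
  also have "\<dots> = d/2 + (1/(2*d)) * c^2" using d by (simp add: field_simps power2_eq_square)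
  finally show ?thesis .
qed

lemma err_L2:
  fixes E D :: "real \<Rightarrow> complex"
  assumes hw: "has_weak_deriv_on L E D" and E0: "E 0 = 0"
    and iD: "(LINT x:{0..L}|lborel. (cmod (D x))^2) \<le> d^2" and d: "d > 0" and L: "L > 0"
  shows "\<forall>x\<in>{0..L}. cmod (E x) \<le> d*(L+1)/2"
proof
  fix x assume x: "x \<in> {0..L}"
  have l2: "L2_on L D" using hw unfolding has_weak_deriv_on_def by blast
  have i1: "set_integrable lborel {0..L} D" by (rule L2_L1[OF l2])
  have i2: "set_integrable lborel {0..L} (\<lambda>t. (cmod (D t))^2)" using l2 unfolding L2_on_def by blast
  have "E x = E 0 + (LINT t:{0..x}|lborel. D t)" using hw x unfolding has_weak_deriv_on_def by blast
  then have "cmod (E x) = cmod (LINT t:{0..x}|lborel. D t)" using E0 by simp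
  also have "\<dots> \<le> (LINT t:{0..x}|lborel. cmod (D t))"
    by (rule set_integral_norm_bound[OF L1_sub[OF i1 x]])
  also have "\<dots> \<le> (LINT t:{0..L}|lborel. cmod (D t))"
    by (rule mono_set[OF set_integrable_norm[OF i1] _ x]) auto
  also have "\<dots> \<le> (LINT t:{0..L}|lborel. d/2 + (1/(2*d)) * (cmod (D t))^2)"
    using set_integrable_norm[OF i1] i2 d
    by (intro set_integral_mono amgm set_integral_add set_integrable_const_I set_integrable_mult_right) auto
  also have "\<dots> = d/2 * L + (1/(2*d)) * (LINT t:{0..L}|lborel. (cmod (D t))^2)"
  proof -
    have "(LINT t:{0..L}|lborel. d/2 + (1/(2*d)) * (cmod (D t))^2) =
        (LINT t:{0..L}|lborel. d/2) + (LINT t:{0..L}|lborel. (1/(2*d)) * (cmod (D t))^2)"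
      using i2 by (intro set_integral_add(2) set_integrable_const_I set_integrable_mult_right)
    also have "(LINT t:{0..L}|lborel. d/2) = measure lborel {0..L} *\<^sub>R (d/2)"
      by (rule set_integral_const) (auto simp: emeasure_lborel_Icc_eq)
    also have "\<dots> = d/2 * L" using L by simp
    finally show ?thesis by simp
  qed
  also have "\<dots> \<le> d/2 * L + (1/(2*d)) * d^2"
    using iD d by (intro add_left_mono mult_left_mono) auto
  also have "\<dots> = d*(L+1)/2" using d by (simp add: field_simps power2_eq_square)
  finally show "cmod (E x) \<le> d*(L+1)/2" .
qed

lemma err_sup:
  fixes E D :: "real \<Rightarrow> complex"
  assumes hw: "has_weak_deriv_on L E D" and E0: "E 0 = 0"
    and bD: "\<forall>x\<in>{0..L}. cmod (D x) \<le> Bd" and L: "L > 0"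
  shows "\<forall>x\<in>{0..L}. cmod (E x) \<le> L * Bd"
proof
  fix x assume x: "x \<in> {0..L}"
  have l2: "L2_on L D" using hw unfolding has_weak_deriv_on_def by blast
  have i1: "set_integrable lborel {0..L} D" by (rule L2_L1[OF l2])
  have "E x = E 0 + (LINT t:{0..x}|lborel. D t)" using hw x unfolding has_weak_deriv_on_def by blast
  then have "cmod (E x) = cmod (LINT t:{0..x}|lborel. D t)" using E0 by simp
  also have "\<dots> \<le> (LINT t:{0..x}|lborel. cmod (D t))"
    by (rule set_integral_norm_bound[OF L1_sub[OF i1 x]])
  also have "\<dots> \<le> (LINT t:{0..L}|lborel. cmod (D t))"
    by (rule mono_set[OF set_integrable_norm[OF i1] _ x]) auto
  also have "\<dots> \<le> Bd * L"
    by (rule int_bound[OF set_integrable_norm[OF i1]]) (use bD L in auto)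
  finally show "cmod (E x) \<le> L * Bd" by (simp add: mult.commute)
qed

lemma sq_int_bound:
  fixes E :: "real \<Rightarrow> complex"
  assumes "L2_on L E" "\<forall>x\<in>{0..L}. cmod (E x) \<le> Bd" "0 \<le> L"
  shows "(LINT x:{0..L}|lborel. (cmod (E x))^2) \<le> Bd^2 * L"
  using assms unfolding L2_on_def by (intro int_bound) (auto intro: power_mono)

lemma pow_integral:
  assumes L: "L > 0"
  shows "(LINT x:{0..L}|lborel. (x/L)^k) = L / (Suc k)"
    and "(LINT x:{0..L}|lborel. (1 - x/L)^k) = L / (Suc k)"
proof -
  have c1: "continuous_on {0..L} (\<lambda>x. (x/L)^k)" using L by (intro continuous_intros) auto
  have c2: "continuous_on {0..L} (\<lambda>x. (1 - x/L)^k)" using L by (intro continuous_intros) auto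
  have "((\<lambda>x. (x/L)^k) has_integral ((\<lambda>x. L/(Suc k) * (x/L)^(Suc k)) L - (\<lambda>x. L/(Suc k) * (x/L)^(Suc k)) 0)) {0..L}"
  proof (rule fundamental_theorem_of_calculus)
    show "0 \<le> L" using L by simp
    fix x assume "x \<in> {0..L}"
    have "((\<lambda>x. x/L) has_real_derivative 1/L) (at x)"
      using DERIV_cdivide[OF DERIV_ident, of L x] by simp
    from DERIV_cmult[OF DERIV_power[OF this, of "Suc k"], of "L/(Suc k)"]
    have "((\<lambda>x. L/(Suc k) * (x/L)^(Suc k)) has_real_derivative
        L/(Suc k) * (real (Suc k) * ((x/L)^k * (1/L)))) (at x)" by simp
    moreover have "L/(Suc k) * (real (Suc k) * ((x/L)^k * (1/L))) = (x/L)^k"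
      using L by (simp add: field_simps del: of_nat_Suc)
    ultimately have "((\<lambda>x. L/(Suc k) * (x/L)^(Suc k)) has_real_derivative (x/L)^k) (at x)" by simp
    then show "((\<lambda>x. L/(Suc k) * (x/L)^(Suc k)) has_vector_derivative (x/L)^k) (at x within {0..L})"
      by (simp add: has_real_derivative_iff_has_vector_derivative has_vector_derivative_at_within)
  qed
  then have "integral {0..L} (\<lambda>x. (x/L)^k) = L / (Suc k)" using L by (simp add: integral_unique)
  moreover have "(LINT x:{0..L}|lborel. (x/L)^k) = integral {0..L} (\<lambda>x. (x/L)^k)"
    by (rule set_borel_integral_eq_integral(2)) (unfold set_integrable_def, intro borel_integrable_compact c1, auto)
  ultimately show "(LINT x:{0..L}|lborel. (x/L)^k) = L / (Suc k)" by simp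
  have "((\<lambda>x. (1 - x/L)^k) has_integral ((\<lambda>x. - L/(Suc k) * (1 - x/L)^(Suc k)) L - (\<lambda>x. - L/(Suc k) * (1 - x/L)^(Suc k)) 0)) {0..L}"
  proof (rule fundamental_theorem_of_calculus)
    show "0 \<le> L" using L by simp
    fix x assume "x \<in> {0..L}"
    have "((\<lambda>x. 1 - x/L) has_real_derivative - (1/L)) (at x)"
      using DERIV_diff[OF DERIV_const DERIV_cdivide[OF DERIV_ident, of L x], of 1] by simp
    from DERIV_cmult[OF DERIV_power[OF this, of "Suc k"], of "- L/(Suc k)"]
    have "((\<lambda>x. - L/(Suc k) * (1 - x/L)^(Suc k)) has_real_derivative
        - L/(Suc k) * (real (Suc k) * ((1 - x/L)^k * (- (1/L))))) (at x)" by simp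
    moreover have "- L/(Suc k) * (real (Suc k) * ((1 - x/L)^k * (- (1/L)))) = (1 - x/L)^k"
      using L by (simp add: field_simps del: of_nat_Suc)
    ultimately have "((\<lambda>x. - L/(Suc k) * (1 - x/L)^(Suc k)) has_real_derivative (1 - x/L)^k) (at x)" by simp
    then show "((\<lambda>x. - L/(Suc k) * (1 - x/L)^(Suc k)) has_vector_derivative (1 - x/L)^k) (at x within {0..L})"
      by (simp add: has_real_derivative_iff_has_vector_derivative has_vector_derivative_at_within)
  qed
  then have "integral {0..L} (\<lambda>x. (1 - x/L)^k) = L / (Suc k)" using L by (simp add: integral_unique)
  moreover have "(LINT x:{0..L}|lborel. (1 - x/L)^k) = integral {0..L} (\<lambda>x. (1 - x/L)^k)"
    by (rule set_borel_integral_eq_integral(2)) (unfold set_integrable_def, intro borel_integrable_compact c2, auto)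
  ultimately show "(LINT x:{0..L}|lborel. (1 - x/L)^k) = L / (Suc k)" by simp
qed

lemma prim_weak:
  fixes f :: "real \<Rightarrow> complex"
  assumes "continuous_on {0..L} f" "0 \<le> L"
  shows "has_weak_deriv_on L (\<lambda>x. c + integral {0..x} f) f"
proof (rule weak_deriv_FTC[OF assms(2) _ assms(1)])
  show "\<forall>x\<in>{0..L}. ((\<lambda>x. c + integral {0..x} f) has_vector_derivative f x) (at x within {0..L})"
    using integral_has_vector_derivative[OF assms(1)]
    by (auto intro!: derivative_eq_intros)
qed

lemma prim_cont2:
  fixes f :: "real \<Rightarrow> complex"
  assumes "continuous_on {0..L} f"
  shows "continuous_on {0..L} (\<lambda>x. c + integral {0..x} f)"
  using indefinite_integral_continuous_1[OF integrable_continuous_real[OF assms]]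
  by (intro continuous_intros)

lemma poly_weak:
  fixes f :: "real \<Rightarrow> complex"
  assumes "\<And>x. (f has_vector_derivative f' x) (at x)" "polynomial_function f'" "0 \<le> L"
  shows "has_weak_deriv_on L f f'"
  by (rule weak_deriv_FTC[OF assms(3)])
    (use assms in \<open>auto intro: has_vector_derivative_at_within continuous_on_polymonial_function\<close>)



lemma sum_le1: "(\<Sum>j\<le>1::nat. (F j::real)) = F 0 + F 1" by (simp add: atMost_Suc add_ac)
lemma sum_le2: "(\<Sum>j\<le>2::nat. (F j::real)) = F 0 + F 1 + F 2" by (simp add: atMost_Suc numeral_2_eq_2 add_ac)

lemma v_approx:
  fixes v :: "real \<Rightarrow> complex"
  assumes v: "v \<in> sobolev 1 L" and L: "L > 0" and d: "d > 0"
  obtains v1 where "v1 \<in> sobolev 2 L" "v1 0 = v 0"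
    "(sobolev_norm 1 L (\<lambda>x. v x - v1 x))^2 \<le> d^2 * (((L+1)/2)^2 * L + 1)"
    "(cmod (v L - v1 L))^2 \<le> d^2 * ((L+1)/2)^2"
proof -
  obtain dv where dv: "deriv_chain 1 L v dv" using v unfolding sobolev_def by blast
  have hdv: "has_weak_deriv_on L (dv 0) (dv 1)" using dv unfolding deriv_chain_def by simp
  have dv0: "\<forall>x\<in>{0..L}. dv 0 x = v x" using dv unfolding deriv_chain_def by simp
  have l2: "L2_on L (dv 1)" using dv unfolding deriv_chain_def by simp
  obtain r where r: "polynomial_function r" and rI: "(LINT x:{0..L}|lborel. (cmod (dv 1 x - r x))^2) < d^2"
    using dens_poly[OF l2, of "d^2"] d L by auto
  obtain r' where r': "polynomial_function r'" "\<And>x. (r has_vector_derivative r' x) (at x)"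
    using has_vector_derivative_polynomial_function[OF r] by blast
  have rc: "continuous_on {0..L} r" using r by (rule continuous_on_polymonial_function)
  define v1 where "v1 = (\<lambda>x. v 0 + integral {0..x} r)"
  have h1: "has_weak_deriv_on L v1 r" unfolding v1_def using rc L by (intro prim_weak) auto
  have h2: "has_weak_deriv_on L r r'" using r' L by (intro poly_weak) auto
  have "deriv_chain 2 L v1 (\<lambda>j. if j = 0 then v1 else if j = 1 then r else r')"
    unfolding deriv_chain_def
  proof (intro conjI allI impI ballI)
    show "L2_on L (if 2 = (0::nat) then v1 else if 2 = (1::nat) then r else r')"
      using continuous_on_polymonial_function[OF r'(1)] by (simp add: L2_cont)
    fix j :: nat assume "j < 2"
    then have "j = 0 \<or> j = 1" by auto
    then show "has_weak_deriv_on L (if j = 0 then v1 else if j = 1 then r else r')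
        (if Suc j = 0 then v1 else if Suc j = 1 then r else r')" using h1 h2 by auto
  qed simp
  then have v1s: "v1 \<in> sobolev 2 L" unfolding sobolev_def by blast
  have v10: "v1 0 = v 0" unfolding v1_def by simp
  have hE: "has_weak_deriv_on L (\<lambda>x. v x - v1 x) (\<lambda>x. dv 1 x - r x)"
    by (rule weak_deriv_cong[OF weak_deriv_diff[OF hdv h1]]) (use dv0 L in auto)
  have lE1: "L2_on L (\<lambda>x. dv 1 x - r x)" using hE unfolding has_weak_deriv_on_def by blast
  define E where "E = (\<lambda>j::nat. if j = 0 then (\<lambda>x. v x - v1 x) else (\<lambda>x. dv 1 x - r x))"
  have "deriv_chain 1 L (\<lambda>x. v x - v1 x) E"
    unfolding deriv_chain_def E_def using hE lE1 by auto
  from wderiv_chain(2)[OF this L]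
  have nv: "sobolev_norm 1 L (\<lambda>x. v x - v1 x) = sqrt ((LINT x:{0..L}|lborel. (cmod (v x - v1 x))^2)
      + (LINT x:{0..L}|lborel. (cmod (dv 1 x - r x))^2))"
    unfolding sum_le1 E_def by simp
  have bE: "\<forall>x\<in>{0..L}. cmod (v x - v1 x) \<le> d*(L+1)/2"
    by (rule err_L2[OF hE]) (use v10 rI d L in auto)
  have lE0: "L2_on L (\<lambda>x. v x - v1 x)" using weak_deriv_cont[OF hE] by (rule L2_cont)
  have i0: "(LINT x:{0..L}|lborel. (cmod (v x - v1 x))^2) \<le> (d*(L+1)/2)^2 * L"
    by (rule sq_int_bound[OF lE0 bE]) (use L in simp)
  have nn: "0 \<le> (LINT x:{0..L}|lborel. (cmod (v x - v1 x))^2)"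
    "0 \<le> (LINT x:{0..L}|lborel. (cmod (dv 1 x - r x))^2)"
    unfolding set_lebesgue_integral_def by (auto intro!: Bochner_Integration.integral_nonneg)
  have "(sobolev_norm 1 L (\<lambda>x. v x - v1 x))^2 = (LINT x:{0..L}|lborel. (cmod (v x - v1 x))^2)
      + (LINT x:{0..L}|lborel. (cmod (dv 1 x - r x))^2)"
    unfolding nv using nn by simp
  also have "\<dots> \<le> (d*(L+1)/2)^2 * L + d^2" using i0 rI by linarith
  also have "\<dots> = d^2 * (((L+1)/2)^2 * L + 1)" by (simp add: power2_eq_square field_simps)
  finally have n1: "(sobolev_norm 1 L (\<lambda>x. v x - v1 x))^2 \<le> d^2 * (((L+1)/2)^2 * L + 1)" .
  have "cmod (v L - v1 L) \<le> d*(L+1)/2" using bE L by auto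
  then have "(cmod (v L - v1 L))^2 \<le> (d*(L+1)/2)^2" by (intro power_mono) auto
  moreover have "(d*(L+1)/2)^2 = d^2 * ((L+1)/2)^2" unfolding power2_eq_square by (simp add: field_simps)
  ultimately have n2: "(cmod (v L - v1 L))^2 \<le> d^2 * ((L+1)/2)^2" by simp
  show ?thesis using that[OF v1s v10 n1 n2] .
qed

lemma poly_tau:
  "polynomial_function (\<lambda>x::real. (1 - x/L)^n)" "polynomial_function (\<lambda>x::real. (x/L)^n)"
proof -
  have "real_polynomial_function (\<lambda>x::real. (1 - x/L)^n)"
    by (intro real_polynomial_function_power real_polynomial_function_diff real_polynomial_function_divide)
      (auto simp: real_polynomial_function_eq)
  then show "polynomial_function (\<lambda>x::real. (1 - x/L)^n)" by (simp add: real_polynomial_function_eq)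
  have "real_polynomial_function (\<lambda>x::real. (x/L)^n)"
    by (intro real_polynomial_function_power real_polynomial_function_divide)
      (auto simp: real_polynomial_function_eq)
  then show "polynomial_function (\<lambda>x::real. (x/L)^n)" by (simp add: real_polynomial_function_eq)
qed

lemma hint_pow:
  assumes L: "L > 0"
  shows "((\<lambda>x. (x/L)^k) has_integral (L / Suc k)) {0..L}"
    and "((\<lambda>x. (1 - x/L)^k) has_integral (L / Suc k)) {0..L}"
proof -
  have c1: "continuous_on {0..L} (\<lambda>x. (x/L)^k)" using L by (intro continuous_intros) auto
  have c2: "continuous_on {0..L} (\<lambda>x. (1 - x/L)^k)" using L by (intro continuous_intros) auto
  have "(LINT x:{0..L}|lborel. (x/L)^k) = integral {0..L} (\<lambda>x. (x/L)^k)"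
    by (rule set_borel_integral_eq_integral(2)) (unfold set_integrable_def, intro borel_integrable_compact c1, auto)
  then have "integral {0..L} (\<lambda>x. (x/L)^k) = L / Suc k" using pow_integral(1)[OF L, of k] by simp
  then show "((\<lambda>x. (x/L)^k) has_integral (L / Suc k)) {0..L}"
    using integrable_integral[OF integrable_continuous_real[OF c1]] by simp
  have "(LINT x:{0..L}|lborel. (1 - x/L)^k) = integral {0..L} (\<lambda>x. (1 - x/L)^k)"
    by (rule set_borel_integral_eq_integral(2)) (unfold set_integrable_def, intro borel_integrable_compact c2, auto)
  then have "integral {0..L} (\<lambda>x. (1 - x/L)^k) = L / Suc k" using pow_integral(2)[OF L, of k] by simp
  then show "((\<lambda>x. (1 - x/L)^k) has_integral (L / Suc k)) {0..L}"
    using integrable_integral[OF integrable_continuous_real[OF c2]] by simp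
qed



lemma w_approx:
  fixes w :: "real \<Rightarrow> complex" and rho a :: complex and PL :: real
  assumes w: "w \<in> sobolev 2 L" and L: "L > 0" and d: "d > 0" and PL: "PL > 0"
  obtains w1 where "w1 \<in> sobolev 3 L" "w1 0 = w 0" "wderiv 3 L 1 w1 0 = wderiv 2 L 1 w 0"
    "wderiv 3 L 2 w1 0 = a"
    "rho * wderiv 3 L 1 w1 L + complex_of_real PL * wderiv 3 L 2 w1 L = 0"
    "(sobolev_norm 2 L (\<lambda>x. w x - w1 x))^2 \<le> d^2 * ((L*(L+1)/2)^2 * L + ((L+1)/2)^2 * L + 1)"
proof -
  obtain dw where dw: "deriv_chain 2 L w dw" using w unfolding sobolev_def by blast
  have hd0: "has_weak_deriv_on L (dw 0) (dw 1)" using dw unfolding deriv_chain_def by simp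
  have "\<forall>j<2. has_weak_deriv_on L (dw j) (dw (Suc j))" using dw unfolding deriv_chain_def by simp
  then have hd1: "has_weak_deriv_on L (dw 1) (dw 2)" using spec[of _ 1] by (simp add: numeral_2_eq_2)
  have dw0: "\<forall>x\<in>{0..L}. dw 0 x = w x" using dw unfolding deriv_chain_def by simp
  have l2: "L2_on L (dw 2)" using dw unfolding deriv_chain_def by simp
  define c1 where "c1 = dw 1 0"
  have wc1: "wderiv 2 L 1 w 0 = c1" using wderiv_chain(1)[OF dw L] L unfolding c1_def by auto
  obtain p where p: "polynomial_function p" and pI: "(LINT x:{0..L}|lborel. (cmod (dw 2 x - p x))^2) < d^2/4"
    using dens_poly[OF l2, of "d^2/4"] d L by auto
  have pc: "continuous_on {0..L} p" using p by (rule continuous_on_polymonial_function)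
  define al where "al = a - p 0"
  define Ip where "Ip = integral {0..L} p"
  define K where "K = cmod rho * (cmod c1 + cmod Ip + L * cmod al) + PL * cmod (p L)"
  define Q where "Q = 8 * ((cmod al)^2 + (2*K/PL)^2) * L / d^2 + 2 * cmod rho * L / PL + 1"
  obtain n :: nat where n: "Q < real n" using reals_Archimedean2 by blast
  have K0: "0 \<le> K" unfolding K_def using L PL by auto
  have Q1: "2 * cmod rho * L / PL + 1 \<le> Q" "8 * ((cmod al)^2 + (2*K/PL)^2) * L / d^2 \<le> Q"
    unfolding Q_def using L PL d by auto
  have n1: "n \<ge> 1"
  proof -
    have "0 \<le> 2 * cmod rho * L / PL" using L PL by simp
    then have "1 < real n" using n Q1(1) by linarith
    then show ?thesis by simp
  qed
  define m where "m = L / real (Suc n)"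
  have m: "0 < m" "m \<le> L" unfolding m_def using L by (auto simp: field_simps)
  have rm: "cmod rho * m \<le> PL / 2"
  proof -
    have "2 * cmod rho * L / PL < real (Suc n)" using n Q1 by simp
    then have "2 * cmod rho * L < real (Suc n) * PL" using PL by (simp add: field_simps)
    then show ?thesis unfolding m_def using PL by (simp add: field_simps)
  qed
  define den where "den = rho * complex_of_real m + complex_of_real PL"
  have den: "cmod den \<ge> PL / 2"
  proof -
    have "cmod (complex_of_real PL) \<le> cmod den + cmod (rho * complex_of_real m)"
      unfolding den_def using norm_triangle_ineq4[of "rho * complex_of_real m + complex_of_real PL" "rho * complex_of_real m"]
      by (simp add: algebra_simps)
    moreover have "cmod (rho * complex_of_real m) = cmod rho * m" using m by (simp add: norm_mult)
    ultimately show ?thesis using PL rm by simp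
  qed
  then have den0: "den \<noteq> 0" using PL by auto
  define Nm where "Nm = rho * (c1 + Ip + complex_of_real m * al) + complex_of_real PL * p L"
  define lam where "lam = - Nm / den"
  have Nm: "cmod Nm \<le> K"
  proof -
    have "cmod Nm \<le> cmod (rho * (c1 + Ip + complex_of_real m * al)) + cmod (complex_of_real PL * p L)"
      unfolding Nm_def by (rule norm_triangle_ineq)
    also have "\<dots> = cmod rho * cmod (c1 + Ip + complex_of_real m * al) + PL * cmod (p L)"
      using PL by (simp add: norm_mult)
    also have "\<dots> \<le> cmod rho * (cmod c1 + cmod Ip + L * cmod al) + PL * cmod (p L)"
    proof -
      have "cmod (c1 + Ip + complex_of_real m * al) \<le> cmod c1 + cmod Ip + m * cmod al"
        using m norm_triangle_ineq[of "c1 + Ip" "complex_of_real m * al"] norm_triangle_ineq[of c1 Ip]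
        by (simp add: norm_mult)
      also have "\<dots> \<le> cmod c1 + cmod Ip + L * cmod al" using m by (simp add: mult_right_mono)
      finally show ?thesis by (simp add: mult_left_mono)
    qed
    finally show ?thesis unfolding K_def .
  qed
  have lamb: "cmod lam \<le> 2 * K / PL"
  proof -
    have "cmod lam = cmod Nm / cmod den" unfolding lam_def by (simp add: norm_divide)
    also have "\<dots> \<le> K / (PL / 2)"
      using Nm den PL K0 by (intro frac_le) auto
    finally show ?thesis by (simp add: mult.commute)
  qed
  define tau where "tau = (\<lambda>x::real. (1 - x/L)^n)"
  define sig where "sig = (\<lambda>x::real. (x/L)^n)"
  define f where "f = (\<lambda>x. p x + tau x *\<^sub>R al + sig x *\<^sub>R lam)"
  have fpoly: "polynomial_function f" unfolding f_def tau_def sig_def using p poly_tau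
    by (intro polynomial_function_add polynomial_function_mult) auto
  obtain f' where f': "polynomial_function f'" "\<And>x. (f has_vector_derivative f' x) (at x)"
    using has_vector_derivative_polynomial_function[OF fpoly] by blast
  have fc: "continuous_on {0..L} f" using fpoly by (rule continuous_on_polymonial_function)
  define F where "F = (\<lambda>x. c1 + integral {0..x} f)"
  have Fc: "continuous_on {0..L} F" unfolding F_def using fc by (rule prim_cont2)
  define w1 where "w1 = (\<lambda>x. w 0 + integral {0..x} F)"
  have h01: "has_weak_deriv_on L w1 F" unfolding w1_def using Fc L by (intro prim_weak) auto
  have h12: "has_weak_deriv_on L F f" unfolding F_def using fc L by (intro prim_weak) auto
  have h23: "has_weak_deriv_on L f f'" using f' L by (intro poly_weak) auto
  define ds where "ds = (\<lambda>j::nat. if j = 0 then w1 else if j = 1 then F else if j = 2 then f else f')"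
  have ch: "deriv_chain 3 L w1 ds"
    unfolding deriv_chain_def
  proof (intro conjI allI impI ballI)
    show "L2_on L (ds 3)" unfolding ds_def
      using continuous_on_polymonial_function[OF f'(1)] by (simp add: L2_cont)
    fix j :: nat assume "j < 3"
    then have "j = 0 \<or> j = 1 \<or> j = 2" by auto
    then show "has_weak_deriv_on L (ds j) (ds (Suc j))" unfolding ds_def using h01 h12 h23 by auto
  qed (simp add: ds_def)
  then have w1s: "w1 \<in> sobolev 3 L" unfolding sobolev_def by blast
  have wd1: "wderiv 3 L 1 w1 x = F x" if "x \<in> {0..L}" for x
    using wderiv_chain(1)[OF ch L] that unfolding ds_def by auto
  have wd2: "wderiv 3 L 2 w1 x = f x" if "x \<in> {0..L}" for x
    using wderiv_chain(1)[OF ch L] that unfolding ds_def by auto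
  have I0: "0 \<in> {0..L}" "L \<in> {0..L}" using L by auto
  have w10: "w1 0 = w 0" unfolding w1_def by simp
  have F0: "F 0 = c1" unfolding F_def by simp
  have f0: "f 0 = a" unfolding f_def tau_def sig_def al_def using n1 by simp
  have fL: "f L = p L + lam" unfolding f_def tau_def sig_def using n1 L by simp
  have fint: "(f has_integral (Ip + m *\<^sub>R al + m *\<^sub>R lam)) {0..L}"
    unfolding f_def
  proof (intro has_integral_add has_integral_scaleR_left)
    show "(p has_integral Ip) {0..L}" unfolding Ip_def
      by (rule integrable_integral[OF integrable_continuous_real[OF pc]])
    show "(tau has_integral m) {0..L}" unfolding tau_def m_def by (rule hint_pow(2)[OF L])
    show "(sig has_integral m) {0..L}" unfolding sig_def m_def by (rule hint_pow(1)[OF L])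
  qed
  have FL: "F L = c1 + Ip + complex_of_real m * al + complex_of_real m * lam"
    unfolding F_def using integral_unique[OF fint] by (simp add: scaleR_conv_of_real)
  have BC: "rho * F L + complex_of_real PL * f L = 0"
  proof -
    have "rho * F L + complex_of_real PL * f L = Nm + lam * den"
      unfolding FL fL Nm_def den_def by (simp add: algebra_simps)
    also have "\<dots> = 0" unfolding lam_def using den0 by simp
    finally show ?thesis .
  qed
  have hE0: "has_weak_deriv_on L (\<lambda>x. w x - w1 x) (\<lambda>x. dw 1 x - F x)"
    by (rule weak_deriv_cong[OF weak_deriv_diff[OF hd0 h01]]) (use dw0 L in auto)
  have hE1: "has_weak_deriv_on L (\<lambda>x. dw 1 x - F x) (\<lambda>x. dw 2 x - f x)"
    by (rule weak_deriv_diff[OF hd1 h12])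
  have lE2: "L2_on L (\<lambda>x. dw 2 x - f x)" using hE1 unfolding has_weak_deriv_on_def by blast
  define E where "E = (\<lambda>j::nat. if j = 0 then (\<lambda>x. w x - w1 x) else if j = 1 then (\<lambda>x. dw 1 x - F x)
      else (\<lambda>x. dw 2 x - f x))"
  have "deriv_chain 2 L (\<lambda>x. w x - w1 x) E"
    unfolding deriv_chain_def
  proof (intro conjI allI impI ballI)
    show "L2_on L (E 2)" unfolding E_def using lE2 by simp
    fix j :: nat assume "j < 2"
    then have "j = 0 \<or> j = 1" by auto
    then show "has_weak_deriv_on L (E j) (E (Suc j))" unfolding E_def using hE0 hE1 by auto
  qed (simp add: E_def)
  from wderiv_chain(2)[OF this L]
  have nw: "sobolev_norm 2 L (\<lambda>x. w x - w1 x) = sqrt ((LINT x:{0..L}|lborel. (cmod (w x - w1 x))^2)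
      + (LINT x:{0..L}|lborel. (cmod (dw 1 x - F x))^2) + (LINT x:{0..L}|lborel. (cmod (dw 2 x - f x))^2))"
    unfolding sum_le2 E_def by simp
  have lp: "L2_on L p" using pc by (rule L2_cont)
  have lf: "L2_on L f" using fc by (rule L2_cont)
  have pf: "(LINT x:{0..L}|lborel. (cmod (p x - f x))^2) \<le> d^2/4"
  proof -
    have ctau: "continuous_on {0..L} tau" "continuous_on {0..L} sig"
      unfolding tau_def sig_def using L by (auto intro!: continuous_intros)
    have i1: "set_integrable lborel {0..L} (\<lambda>x. (cmod (p x - f x))^2)"
      using L2_diff[OF lp lf] unfolding L2_on_def by blast
    have i2: "set_integrable lborel {0..L} (\<lambda>x. 2 * (cmod al)^2 * (1 - x/L)^(2*n) + 2 * (cmod lam)^2 * (x/L)^(2*n))"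
      unfolding set_integrable_def using L by (intro borel_integrable_compact continuous_intros) auto
    have "(LINT x:{0..L}|lborel. (cmod (p x - f x))^2) \<le>
        (LINT x:{0..L}|lborel. 2 * (cmod al)^2 * (1 - x/L)^(2*n) + 2 * (cmod lam)^2 * (x/L)^(2*n))"
    proof (rule set_integral_mono[OF i1 i2])
      fix x
      have "p x - f x = - (tau x *\<^sub>R al + sig x *\<^sub>R lam)" unfolding f_def by simp
      then have "cmod (p x - f x) = cmod (tau x *\<^sub>R al + sig x *\<^sub>R lam)" by (simp only: norm_minus_cancel)
      also have "\<dots> \<le> cmod (tau x *\<^sub>R al) + cmod (sig x *\<^sub>R lam)" by (rule norm_triangle_ineq)
      finally have "(cmod (p x - f x))^2 \<le> (cmod (tau x *\<^sub>R al) + cmod (sig x *\<^sub>R lam))^2"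
        by (intro power_mono) auto
      also have "\<dots> \<le> 2 * (cmod (tau x *\<^sub>R al))^2 + 2 * (cmod (sig x *\<^sub>R lam))^2" by (rule sq_sum_le)
      also have "(cmod (tau x *\<^sub>R al))^2 = (cmod al)^2 * (1 - x/L)^(2*n)"
        unfolding tau_def by (simp add: power_mult_distrib power_mult power2_abs mult.commute)
      also have "(cmod (sig x *\<^sub>R lam))^2 = (cmod lam)^2 * (x/L)^(2*n)"
        unfolding sig_def by (simp add: power_mult_distrib power_mult power2_abs mult.commute)
      finally show "(cmod (p x - f x))^2 \<le> 2 * (cmod al)^2 * (1 - x/L)^(2*n) + 2 * (cmod lam)^2 * (x/L)^(2*n)"
        by simp
    qed
    also have "\<dots> = 2 * (cmod al)^2 * (L / Suc (2*n)) + 2 * (cmod lam)^2 * (L / Suc (2*n))"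
    proof -
      have j1: "set_integrable lborel {0..L} (\<lambda>x. (1 - x/L)^(2*n))"
        unfolding set_integrable_def using L by (intro borel_integrable_compact continuous_intros) auto
      have j2: "set_integrable lborel {0..L} (\<lambda>x. (x/L)^(2*n))"
        unfolding set_integrable_def using L by (intro borel_integrable_compact continuous_intros) auto
      have "(LINT x:{0..L}|lborel. 2 * (cmod al)^2 * (1 - x/L)^(2*n) + 2 * (cmod lam)^2 * (x/L)^(2*n))
          = (LINT x:{0..L}|lborel. 2 * (cmod al)^2 * (1 - x/L)^(2*n)) + (LINT x:{0..L}|lborel. 2 * (cmod lam)^2 * (x/L)^(2*n))"
        using j1 j2 by (intro set_integral_add(2) set_integrable_mult_right)
      also have "\<dots> = 2 * (cmod al)^2 * (LINT x:{0..L}|lborel. (1 - x/L)^(2*n)) + 2 * (cmod lam)^2 * (LINT x:{0..L}|lborel. (x/L)^(2*n))"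
        by simp
      also have "\<dots> = 2 * (cmod al)^2 * (L / Suc (2*n)) + 2 * (cmod lam)^2 * (L / Suc (2*n))"
        using pow_integral[OF L, of "2*n"] by simp
      finally show ?thesis .
    qed
    also have "\<dots> = 2 * ((cmod al)^2 + (cmod lam)^2) * L / Suc (2*n)" by (simp add: field_simps del: of_nat_Suc)
    also have "\<dots> \<le> 2 * ((cmod al)^2 + (2*K/PL)^2) * L / Suc (2*n)"
    proof -
      have "(cmod lam)^2 \<le> (2*K/PL)^2" using lamb by (intro power_mono) auto
      then show ?thesis using L by (intro divide_right_mono mult_right_mono mult_left_mono) auto
    qed
    also have "\<dots> \<le> d^2/4"
    proof -
      define A where "A = ((cmod al)^2 + (2*K/PL)^2)"
      have A0: "0 \<le> A" unfolding A_def by simp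
      have "8 * A * L / d^2 < real (Suc (2*n))" using n Q1 unfolding A_def by simp
      then have "8 * A * L < real (Suc (2*n)) * d^2" using d by (simp add: field_simps)
      then have "2 * A * L / Suc (2*n) \<le> d^2/4" by (simp add: field_simps)
      then show ?thesis unfolding A_def .
    qed
    finally show ?thesis .
  qed
  have i2: "(LINT x:{0..L}|lborel. (cmod (dw 2 x - f x))^2) \<le> d^2"
    using d2_tri[OF l2 lp lf] pI pf by linarith
  have bE1: "\<forall>x\<in>{0..L}. cmod (dw 1 x - F x) \<le> d*(L+1)/2"
    by (rule err_L2[OF hE1]) (use F0 i2 d L in \<open>auto simp: c1_def\<close>)
  have lE1: "L2_on L (\<lambda>x. dw 1 x - F x)" using weak_deriv_cont[OF hE1] by (rule L2_cont)
  have i1: "(LINT x:{0..L}|lborel. (cmod (dw 1 x - F x))^2) \<le> (d*(L+1)/2)^2 * L"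
    by (rule sq_int_bound[OF lE1 bE1]) (use L in simp)
  have bE0: "\<forall>x\<in>{0..L}. cmod (w x - w1 x) \<le> L * (d*(L+1)/2)"
    by (rule err_sup[OF hE0]) (use w10 bE1 L in auto)
  have lE0: "L2_on L (\<lambda>x. w x - w1 x)" using weak_deriv_cont[OF hE0] by (rule L2_cont)
  have i0: "(LINT x:{0..L}|lborel. (cmod (w x - w1 x))^2) \<le> (L * (d*(L+1)/2))^2 * L"
    by (rule sq_int_bound[OF lE0 bE0]) (use L in simp)
  have nn: "0 \<le> (LINT x:{0..L}|lborel. (cmod (w x - w1 x))^2)"
    "0 \<le> (LINT x:{0..L}|lborel. (cmod (dw 1 x - F x))^2)"
    "0 \<le> (LINT x:{0..L}|lborel. (cmod (dw 2 x - f x))^2)"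
    unfolding set_lebesgue_integral_def by (auto intro!: Bochner_Integration.integral_nonneg)
  have "(sobolev_norm 2 L (\<lambda>x. w x - w1 x))^2 = (LINT x:{0..L}|lborel. (cmod (w x - w1 x))^2)
      + (LINT x:{0..L}|lborel. (cmod (dw 1 x - F x))^2) + (LINT x:{0..L}|lborel. (cmod (dw 2 x - f x))^2)"
    unfolding nw using nn by simp
  also have "\<dots> \<le> (L * (d*(L+1)/2))^2 * L + (d*(L+1)/2)^2 * L + d^2" using i0 i1 i2 by linarith
  also have "\<dots> = d^2 * ((L*(L+1)/2)^2 * L + ((L+1)/2)^2 * L + 1)"
    unfolding power2_eq_square by (simp add: field_simps)
  finally have nrm: "(sobolev_norm 2 L (\<lambda>x. w x - w1 x))^2 \<le> d^2 * ((L*(L+1)/2)^2 * L + ((L+1)/2)^2 * L + 1)" .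
  show ?thesis
  proof (rule that[OF w1s w10])
    show "wderiv 3 L 1 w1 0 = wderiv 2 L 1 w 0" using wd1[OF I0(1)] F0 wc1 by simp
    show "wderiv 3 L 2 w1 0 = a" using wd2[OF I0(1)] f0 by simp
    show "rho * wderiv 3 L 1 w1 L + complex_of_real PL * wderiv 3 L 2 w1 L = 0"
      using wd1[OF I0(2)] wd2[OF I0(2)] BC by simp
  qed (rule nrm)
qed



theorem lemma2p5:
  fixes L P0 th1 th2 th3 th4 :: real and P :: "real \<Rightarrow> real"
    and HH DA :: "((real \<Rightarrow> complex) \<times> (real \<Rightarrow> complex) \<times> complex \<times> complex) set"
  assumes "L > 0" and "P0 > 0"
    and "(\<lambda>x. complex_of_real (P x)) \<in> sobolev 2 L"
    and "\<forall>x\<in>{0..L}. P x \<ge> P0"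
  defines "HH \<equiv> {(w, v, xi, psi). w \<in> sobolev 2 L \<and> v \<in> sobolev 1 L \<and> xi = v L \<and> psi = v 0}"
    and "DA \<equiv> {(w, v, xi, psi). w \<in> sobolev 3 L \<and> v \<in> sobolev 2 L \<and> xi = v L \<and> psi = v 0 \<and>
           wderiv 2 L 1 (\<lambda>x. complex_of_real (P x)) L * wderiv 3 L 1 w L
             + complex_of_real (P L) * wderiv 3 L 2 w L = - wderiv 3 L 1 w L \<and>
           wderiv 2 L 1 (\<lambda>x. complex_of_real (P x)) 0 * wderiv 3 L 1 w 0
             + complex_of_real (P 0) * wderiv 3 L 2 w 0
             = complex_of_real th1 * v 0 + complex_of_real th2 * wderiv 2 L 1 v 0
               + complex_of_real th3 * w 0 + complex_of_real th4 * wderiv 3 L 1 w 0}"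
  shows "\<forall>(w, v, xi, psi)\<in>HH. \<forall>e>0. \<exists>(w1, v1, xi1, psi1)\<in>DA.
           sqrt ((sobolev_norm 2 L (\<lambda>x. w x - w1 x))^2 + (sobolev_norm 1 L (\<lambda>x. v x - v1 x))^2
                 + (cmod (xi - xi1))^2 + (cmod (psi - psi1))^2) < e"
proof -
  note L = assms(1)
  have "P L \<ge> P0" "P 0 \<ge> P0" using assms(4) L by auto
  then have PL: "P L > 0" and PO: "P 0 > 0" using assms(2) by linarith+
  have main: "\<exists>(w1, v1, xi1, psi1)\<in>DA.
           sqrt ((sobolev_norm 2 L (\<lambda>x. w x - w1 x))^2 + (sobolev_norm 1 L (\<lambda>x. v x - v1 x))^2
                 + (cmod (xi - xi1))^2 + (cmod (psi - psi1))^2) < e"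
    if mem: "(w, v, xi, psi) \<in> HH" and e: "e > 0" for w v xi psi e
  proof -
    have w: "w \<in> sobolev 2 L" and v: "v \<in> sobolev 1 L" and xi: "xi = v L" and psi: "psi = v 0"
      using mem unfolding HH_def by auto
    define Cw where "Cw = (L*(L+1)/2)^2 * L + ((L+1)/2)^2 * L + 1"
    define Cv where "Cv = ((L+1)/2)^2 * L + 1"
    define Cx where "Cx = ((L+1)/2)^2"
    define C where "C = Cw + Cv + Cx"
    have C0: "0 \<le> C" unfolding C_def Cw_def Cv_def Cx_def using L by simp
    define dd where "dd = e / (C + 1)"
    have dd: "dd > 0" unfolding dd_def using e C0 by simp
    obtain v1 where v1s: "v1 \<in> sobolev 2 L" and v10: "v1 0 = v 0"
      and nv: "(sobolev_norm 1 L (\<lambda>x. v x - v1 x))^2 \<le> dd^2 * (((L+1)/2)^2 * L + 1)"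
      and nx: "(cmod (v L - v1 L))^2 \<le> dd^2 * ((L+1)/2)^2"
      by (rule v_approx[OF v L dd])
    define P1L where "P1L = wderiv 2 L 1 (\<lambda>x. complex_of_real (P x)) L"
    define P10 where "P10 = wderiv 2 L 1 (\<lambda>x. complex_of_real (P x)) 0"
    define c1 where "c1 = wderiv 2 L 1 w 0"
    define a where "a = (complex_of_real th1 * v 0 + complex_of_real th2 * wderiv 2 L 1 v1 0
               + complex_of_real th3 * w 0 + complex_of_real th4 * c1 - P10 * c1) / complex_of_real (P 0)"
    obtain w1 where w1s: "w1 \<in> sobolev 3 L" and w10: "w1 0 = w 0" and w11: "wderiv 3 L 1 w1 0 = wderiv 2 L 1 w 0"
      and w12: "wderiv 3 L 2 w1 0 = a"
      and bcL: "(1 + P1L) * wderiv 3 L 1 w1 L + complex_of_real (P L) * wderiv 3 L 2 w1 L = 0"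
      and nw: "(sobolev_norm 2 L (\<lambda>x. w x - w1 x))^2 \<le> dd^2 * ((L*(L+1)/2)^2 * L + ((L+1)/2)^2 * L + 1)"
      by (rule w_approx[OF w L dd PL, where rho="1 + P1L" and a=a])
    have inDA: "(w1, v1, v1 L, v1 0) \<in> DA"
    proof -
      have b1: "P1L * wderiv 3 L 1 w1 L + complex_of_real (P L) * wderiv 3 L 2 w1 L = - wderiv 3 L 1 w1 L"
      proof -
        have "P1L * wderiv 3 L 1 w1 L + complex_of_real (P L) * wderiv 3 L 2 w1 L + wderiv 3 L 1 w1 L = 0"
          using bcL by (simp add: algebra_simps)
        then show ?thesis by (simp add: eq_neg_iff_add_eq_0)
      qed
      have P0n: "complex_of_real (P 0) \<noteq> 0" using PO by simp
      have b0: "P10 * c1 + complex_of_real (P 0) * a = complex_of_real th1 * v 0 + complex_of_real th2 * wderiv 2 L 1 v1 0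
               + complex_of_real th3 * w 0 + complex_of_real th4 * c1"
        unfolding a_def using P0n by (simp add: field_simps)
      have w11': "wderiv 3 L 1 w1 0 = c1" using w11 unfolding c1_def .
      show ?thesis unfolding DA_def mem_Collect_eq prod.case
        using w1s v1s b1 b0 w11' w12 w10 v10 unfolding P1L_def P10_def by simp
    qed
    have s: "(sobolev_norm 2 L (\<lambda>x. w x - w1 x))^2 + (sobolev_norm 1 L (\<lambda>x. v x - v1 x))^2
                 + (cmod (xi - v1 L))^2 + (cmod (psi - v1 0))^2 \<le> dd^2 * C"
      using nw nv nx unfolding xi psi v10 C_def Cw_def Cv_def Cx_def by (simp add: algebra_simps)
    have "dd^2 * C < dd^2 * (C + 1)^2"
    proof -
      have "0 \<le> C * C" using C0 by simp
      moreover have "(C+1)^2 = C*C + 2*C + 1" by (simp add: power2_eq_square algebra_simps)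
      ultimately have "C < (C + 1)^2" using C0 by linarith
      then show ?thesis using dd by simp
    qed
    also have "dd^2 * (C + 1)^2 = e^2" unfolding dd_def using C0 by (simp add: power_divide)
    finally have "(sobolev_norm 2 L (\<lambda>x. w x - w1 x))^2 + (sobolev_norm 1 L (\<lambda>x. v x - v1 x))^2
                 + (cmod (xi - v1 L))^2 + (cmod (psi - v1 0))^2 < e^2" using s by linarith
    then have "sqrt ((sobolev_norm 2 L (\<lambda>x. w x - w1 x))^2 + (sobolev_norm 1 L (\<lambda>x. v x - v1 x))^2
                 + (cmod (xi - v1 L))^2 + (cmod (psi - v1 0))^2) < sqrt (e^2)"
      by (rule real_sqrt_less_mono)
    then have "sqrt ((sobolev_norm 2 L (\<lambda>x. w x - w1 x))^2 + (sobolev_norm 1 L (\<lambda>x. v x - v1 x))^2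
                 + (cmod (xi - v1 L))^2 + (cmod (psi - v1 0))^2) < e" using e by simp
    then show ?thesis using inDA by blast
  qed
  show ?thesis using main by blast
qed


end
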